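(* Let $L\in \mathrm{Gr}(V,m)$. (a) If $L\cap \operatorname{int}(K)\neq\emptyset$, then $\operatorname{dist}(L,\Sigma_m)=\nu(L)$. (b) If $L^\perp\cap \operatorname{int}(K^* )\neq\emptyset$, then $\overline{\operatorname{dist}}(\Sigma_m,L)=\bar\nu(L)$.
   Context: Let $V$ be a finite-dimensional real vector space with inner product $\langle\cdot,\cdot\rangle$, and let $K\subseteq V$ be a regular closed convex cone (closed, convex, pointed, with nonempty interior). Let $\|\cdot\|$ and $|||\cdot|||$ be two (possibly different, not necessarily Euclidean) norms on $V$, with dual norms $\|u\|^*:=\max_{\|x\|=1}\langle u,x\rangle$ and $|||u|||^*:=\max_{|||x|||=1}\langle u,x\rangle$. The dual cone is $K^*:=\{u\in V:\langle u,x\rangle\ge0\ \forall x\in K\}$, and $L^\perp$ denotes the orthogonal complement of a linear subspace $L$. $\mathrm{Gr}(V,m)$ is the set of linear subspaces of $V$ of dimension $m$, where $1\le m<\dim V$. For $L_1,L_2\in\mathrm{Gr}(V,m)$ define $\operatorname{dist}(L_1,L_2):=\max_{x\in L_1,x\neq0}\min_{v\in L_2}\frac{|||x-v|||}{\|x\|}$ and $\overline{\operatorname{dist}}(L_1,L_2):=\max_{x\in L_1,x\neq0}\inf_{v\in L_2,v\neq0}\frac{|||x-v|||}{\|v\|}$. The set of ill-posed subspaces is $\Sigma_m:=\{L\in\mathrm{Gr}(V,m): L\cap K\neq\{0\}\text{ and }L^\perp\cap K^*\neq\{0\}\}$, and $\operatorname{dist}(L,\Sigma_m):=\inf_{\tilde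 L\in\Sigma_m}\operatorname{dist}(L,\tilde L)$, $\overline{\operatorname{dist}}(\Sigma_m,L):=\inf_{\tilde L\in\Sigma_m}\overline{\operatorname{dist}}(\tilde L,L)$. Finally $\nu(L):=\min\{\|y-u\|^*: u\in K^*,\ y\in L^\perp,\ |||u|||^*=1\}$ and $\bar\nu(L):=\min\{|||v-x|||: v\in K,\ x\in L,\ \|x\|=1\}$. *)

theory Defs
  imports "HOL-Analysis.Analysis"
begin

definition is_norm :: "('a::real_vector \<Rightarrow> real) \<Rightarrow> bool" where
  "is_norm N \<longleftrightarrow> (\<forall>x. 0 \<le> N x) \<and> (\<forall>x. N x = 0 \<longleftrightarrow> x = 0) \<and>
     (\<forall>c x. N (c *\<^sub>R x) = \<bar>c\<bar> * N x) \<and> (\<forall>x y. N (x + y) \<le> N x + N y)"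

definition dual_norm :: "('a::real_inner \<Rightarrow> real) \<Rightarrow> 'a \<Rightarrow> real" where
  "dual_norm N u = Sup {u \<bullet> x | x. N x = 1}"

definition regular_cone :: "'a::euclidean_space set \<Rightarrow> bool" where
  "regular_cone K \<longleftrightarrow> closed K \<and> convex K \<and> cone K \<and> K \<inter> uminus ` K = {0} \<and> interior K \<noteq> {}"

definition dual_cone :: "'a::real_inner set \<Rightarrow> 'a set" where
  "dual_cone K = {u. \<forall>x\<in>K. 0 \<le> u \<bullet> x}"

definition orth_comp :: "'a::real_inner set \<Rightarrow> 'a set" where
  "orth_comp L = {y. \<forall>x\<in>L. y \<bullet> x = 0}"

definition Gr :: "nat \<Rightarrow> 'a::euclidean_space set set" where
  "Gr m = {L. subspace L \<and> dim L = m}"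

text \<open>dist(L1,L2) = max_{x in L1, x<>0} min_{v in L2} |||x - v||| / ||x||,
  with N1 = ||.|| and N2 = |||.|||.\<close>
definition sdist :: "('a::real_vector \<Rightarrow> real) \<Rightarrow> ('a \<Rightarrow> real) \<Rightarrow> 'a set \<Rightarrow> 'a set \<Rightarrow> real" where
  "sdist N1 N2 L1 L2 = (SUP x\<in>L1 - {0}. INF v\<in>L2. N2 (x - v) / N1 x)"

definition sdistbar :: "('a::real_vector \<Rightarrow> real) \<Rightarrow> ('a \<Rightarrow> real) \<Rightarrow> 'a set \<Rightarrow> 'a set \<Rightarrow> real" where
  "sdistbar N1 N2 L1 L2 = (SUP x\<in>L1 - {0}. INF v\<in>L2 - {0}. N2 (x - v) / N1 v)"

definition Sigma_ill :: "'a::euclidean_space set \<Rightarrow> nat \<Rightarrow> 'a set set" where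
  "Sigma_ill K m = {L \<in> Gr m. L \<inter> K \<noteq> {0} \<and> orth_comp L \<inter> dual_cone K \<noteq> {0}}"

definition dist_to_Sigma :: "('a::euclidean_space \<Rightarrow> real) \<Rightarrow> ('a \<Rightarrow> real) \<Rightarrow> 'a set \<Rightarrow> nat \<Rightarrow> 'a set \<Rightarrow> real" where
  "dist_to_Sigma N1 N2 K m L = (INF L'\<in>Sigma_ill K m. sdist N1 N2 L L')"

definition distbar_from_Sigma :: "('a::euclidean_space \<Rightarrow> real) \<Rightarrow> ('a \<Rightarrow> real) \<Rightarrow> 'a set \<Rightarrow> nat \<Rightarrow> 'a set \<Rightarrow> real" where
  "distbar_from_Sigma N1 N2 K m L = (INF L'\<in>Sigma_ill K m. sdistbar N1 N2 L' L)"

definition nu :: "('a::euclidean_space \<Rightarrow> real) \<Rightarrow> ('a \<Rightarrow> real) \<Rightarrow> 'a set \<Rightarrow> 'a set \<Rightarrow> real" where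
  "nu N1 N2 K L = Inf {dual_norm N1 (y - u) | u y. u \<in> dual_cone K \<and> y \<in> orth_comp L \<and> dual_norm N2 u = 1}"

definition nubar :: "('a::euclidean_space \<Rightarrow> real) \<Rightarrow> ('a \<Rightarrow> real) \<Rightarrow> 'a set \<Rightarrow> 'a set \<Rightarrow> real" where
  "nubar N1 N2 K L = Inf {N2 (v - x) | v x. v \<in> K \<and> x \<in> L \<and> N1 x = 1}"

end

theory Submission
  imports Defs
begin


lemma normD:
  assumes "is_norm N"
  shows "N x \<ge> 0" "N x = 0 \<longleftrightarrow> x = 0" "N (c *\<^sub>R x) = \<bar>c\<bar> * N x" "N (x + y) \<le> N x + N y"
  using assms unfolding is_norm_def by auto

lemma norm_neg: assumes "is_norm N" shows "N (- x) = N x"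
  using normD(3)[OF assms, of "-1" x] by simp

lemma norm_diff_sym: assumes "is_norm N" shows "N (x - y) = N (y - x)"
  using norm_neg[OF assms, of "x - y"] by simp

lemma norm_diff_le: assumes "is_norm N" shows "N (x - y) \<le> N x + N y"
  using normD(4)[OF assms, of x "-y"] norm_neg[OF assms, of y] by simp

lemma norm_sum_le: assumes "is_norm N" shows "N (sum f A) \<le> (\<Sum>i\<in>A. N (f i))"
proof (induction A rule: infinite_finite_induct)
  case (infinite A) then show ?case using normD(2)[OF assms, of 0] by simp
next
  case empty then show ?case using normD(2)[OF assms, of 0] by simp
next
  case (insert x F) then show ?case using normD(4)[OF assms, of "f x" "sum f F"] by simp
qed

lemma norm_upper:
  fixes N :: "'a::euclidean_space \<Rightarrow> real"
  assumes "is_norm N" shows "\<exists>B>0. \<forall>x. N x \<le> B * norm x"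
proof -
  define B where "B = (\<Sum>i\<in>Basis. N i) + 1"
  have B0: "B > 0" unfolding B_def using normD(1)[OF assms] by (simp add: add_pos_nonneg sum_nonneg add.commute)
  have "N x \<le> B * norm x" for x
  proof -
    have "N x = N (\<Sum>i\<in>Basis. (x \<bullet> i) *\<^sub>R i)" by (simp add: euclidean_representation)
    also have "\<dots> \<le> (\<Sum>i\<in>Basis. N ((x \<bullet> i) *\<^sub>R i))" by (rule norm_sum_le[OF assms])
    also have "\<dots> = (\<Sum>i\<in>Basis. \<bar>x \<bullet> i\<bar> * N i)" using normD(3)[OF assms] by simp
    also have "\<dots> \<le> (\<Sum>i\<in>Basis. norm x * N i)"
      by (rule sum_mono) (simp add: Basis_le_norm mult_right_mono normD(1)[OF assms])
    also have "\<dots> = norm x * (\<Sum>i\<in>Basis. N i)" by (simp add: sum_distrib_left)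
    also have "\<dots> \<le> B * norm x" unfolding B_def by (simp add: algebra_simps)
    finally show ?thesis .
  qed
  with B0 show ?thesis by blast
qed

lemma norm_cont:
  fixes N :: "'a::euclidean_space \<Rightarrow> real"
  assumes "is_norm N" shows "continuous_on S N"
proof -
  obtain B where B: "B > 0" "\<And>x. N x \<le> B * norm x" using norm_upper[OF assms] by blast
  have "\<bar>N x - N y\<bar> \<le> B * dist x y" for x y
  proof -
    have "N x \<le> N y + N (x - y)" using normD(4)[OF assms, of y "x - y"] by simp
    moreover have "N y \<le> N x + N (y - x)" using normD(4)[OF assms, of x "y - x"] by simp
    moreover have "N (x - y) \<le> B * dist x y" "N (y - x) \<le> B * dist x y"
      using B(2)[of "x-y"] B(2)[of "y-x"] by (auto simp: dist_norm norm_minus_commute)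
    ultimately show ?thesis by linarith
  qed
  then show ?thesis
    unfolding continuous_on_iff
    apply (intro ballI allI impI)
    subgoal for x e
      apply (rule exI[of _ "e / B"]) using B(1)
      by (auto simp: dist_real_def field_simps intro: le_less_trans)
    done
qed

lemma norm_lower:
  fixes N :: "'a::euclidean_space \<Rightarrow> real"
  assumes "is_norm N" shows "\<exists>c>0. \<forall>x. c * norm x \<le> N x"
proof -
  have "compact (sphere (0::'a) 1)" by simp
  moreover have "sphere (0::'a) 1 \<noteq> {}" by simp
  ultimately obtain x0 where x0: "x0 \<in> sphere 0 1" "\<And>y. y \<in> sphere 0 1 \<Longrightarrow> N x0 \<le> N y"
    using continuous_attains_inf[of "sphere (0::'a) 1" N] norm_cont[OF assms] by blast
  have c0: "N x0 > 0" using x0(1) normD(1,2)[OF assms, of x0] by auto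
  have "N x0 * norm x \<le> N x" for x
  proof (cases "x = 0")
    case True then show ?thesis using normD(1)[OF assms] by simp
  next
    case False
    have "N x0 \<le> N ((1 / norm x) *\<^sub>R x)" using x0(2)[of "(1 / norm x) *\<^sub>R x"] False by simp
    also have "\<dots> = N x / norm x" using normD(3)[OF assms] by simp
    finally show ?thesis using False by (simp add: field_simps)
  qed
  with c0 show ?thesis by blast
qed

lemma norm_equiv:
  fixes N1 N2 :: "'a::euclidean_space \<Rightarrow> real"
  assumes "is_norm N1" "is_norm N2" shows "\<exists>C>0. \<forall>x. N2 x \<le> C * N1 x"
proof -
  obtain B where B: "B > 0" "\<And>x. N2 x \<le> B * norm x" using norm_upper[OF assms(2)] by blast
  obtain c where c: "c > 0" "\<And>x. c * norm x \<le> N1 x" using norm_lower[OF assms(1)] by blast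
  have "N2 x \<le> (B / c) * N1 x" for x
  proof -
    have "N2 x \<le> B * norm x" by (rule B(2))
    also have "\<dots> \<le> B * (N1 x / c)" using c B(1) by (intro mult_left_mono) (auto simp: field_simps)
    finally show ?thesis by simp
  qed
  with B c show ?thesis by (intro exI[of _ "B/c"]) auto
qed




lemma exists_unit:
  fixes N :: "'a::euclidean_space \<Rightarrow> real"
  assumes "is_norm N" shows "\<exists>x. N x = 1"
proof -
  obtain i :: 'a where i: "i \<in> Basis" using nonempty_Basis by blast
  then have "i \<noteq> 0" by auto
  then have "N i > 0" using normD(1,2)[OF assms, of i] by auto
  then have "N ((1 / N i) *\<^sub>R i) = 1" using normD(3)[OF assms] by simp
  then show ?thesis by blast
qed

lemma unit_in_subspace:
  fixes N :: "'a::euclidean_space \<Rightarrow> real"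
  assumes "is_norm N" "x \<noteq> 0" shows "N ((1 / N x) *\<^sub>R x) = 1"
proof -
  have "N x > 0" using normD(1,2)[OF assms(1), of x] assms(2) by auto
  then show ?thesis using normD(3)[OF assms(1)] by simp
qed

lemma dual_bdd:
  fixes N :: "'a::euclidean_space \<Rightarrow> real"
  assumes "is_norm N" shows "bdd_above {u \<bullet> x | x. N x = 1}"
proof -
  obtain c where c: "c > 0" "\<And>x. c * norm x \<le> N x" using norm_lower[OF assms] by blast
  have "u \<bullet> x \<le> norm u / c" if "N x = 1" for x
  proof -
    have "u \<bullet> x \<le> norm u * norm x" by (rule order_trans[OF abs_ge_self Cauchy_Schwarz_ineq2])
    also have "\<dots> \<le> norm u * (1 / c)" using c(2)[of x] that c(1)
      by (intro mult_left_mono) (auto simp: field_simps)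
    finally show ?thesis by simp
  qed
  then show ?thesis unfolding bdd_above_def by blast
qed

lemma dual_ge:
  fixes N :: "'a::euclidean_space \<Rightarrow> real"
  assumes "is_norm N" "N x = 1" shows "u \<bullet> x \<le> dual_norm N u"
  unfolding dual_norm_def using assms by (intro cSup_upper dual_bdd) auto

lemma dual_least:
  fixes N :: "'a::euclidean_space \<Rightarrow> real"
  assumes "is_norm N" "\<And>x. N x = 1 \<Longrightarrow> u \<bullet> x \<le> b" shows "dual_norm N u \<le> b"
  unfolding dual_norm_def using assms exists_unit[OF assms(1)] by (intro cSup_least) auto

lemma dual_le:
  fixes N :: "'a::euclidean_space \<Rightarrow> real"
  assumes "is_norm N" shows "u \<bullet> x \<le> dual_norm N u * N x"
proof (cases "x = 0")
  case True then show ?thesis using normD(2)[OF assms, of 0] by simp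
next
  case False
  have pos: "N x > 0" using normD(1,2)[OF assms, of x] False by auto
  have "u \<bullet> ((1 / N x) *\<^sub>R x) \<le> dual_norm N u"
    by (rule dual_ge[OF assms unit_in_subspace[OF assms False]])
  then show ?thesis using pos by (simp add: field_simps)
qed

lemma dual_nonneg:
  fixes N :: "'a::euclidean_space \<Rightarrow> real"
  assumes "is_norm N" shows "dual_norm N u \<ge> 0"
proof -
  obtain x where x: "N x = 1" using exists_unit[OF assms] by blast
  have "u \<bullet> x \<le> dual_norm N u" by (rule dual_ge[OF assms x])
  moreover have "u \<bullet> (- x) \<le> dual_norm N u" by (rule dual_ge[OF assms]) (simp add: norm_neg[OF assms] x)
  ultimately show ?thesis by simp
qed

lemma dual_approx:
  fixes N :: "'a::euclidean_space \<Rightarrow> real"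
  assumes "is_norm N" "e > 0" shows "\<exists>x. N x = 1 \<and> u \<bullet> x > dual_norm N u - e"
proof -
  have "dual_norm N u - e < Sup {u \<bullet> x | x. N x = 1}" using assms(2) unfolding dual_norm_def by simp
  then obtain y where "y \<in> {u \<bullet> x | x. N x = 1}" "dual_norm N u - e < y"
    using less_cSupE[of _ "{u \<bullet> x | x. N x = 1}"] exists_unit[OF assms(1)] by blast
  then show ?thesis by blast
qed

lemma dual_scale:
  fixes N :: "'a::euclidean_space \<Rightarrow> real"
  assumes "is_norm N" "c \<ge> 0" shows "dual_norm N (c *\<^sub>R u) = c * dual_norm N u"
proof (rule antisym)
  show "dual_norm N (c *\<^sub>R u) \<le> c * dual_norm N u"
    by (rule dual_least[OF assms(1)]) (use dual_ge[OF assms(1)] assms(2) in \<open>auto intro: mult_left_mono\<close>)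
next
  show "c * dual_norm N u \<le> dual_norm N (c *\<^sub>R u)"
  proof (cases "c = 0")
    case True then show ?thesis using dual_nonneg[OF assms(1)] by simp
  next
    case False
    then have c: "c > 0" using assms(2) by simp
    have "dual_norm N u \<le> dual_norm N (c *\<^sub>R u) / c"
    proof (rule dual_least[OF assms(1)])
      fix x assume "N x = 1"
      then have "(c *\<^sub>R u) \<bullet> x \<le> dual_norm N (c *\<^sub>R u)" by (rule dual_ge[OF assms(1)])
      then show "u \<bullet> x \<le> dual_norm N (c *\<^sub>R u) / c" using c by (simp add: field_simps)
    qed
    then show ?thesis using c by (simp add: field_simps)
  qed
qed

lemma dual_neg:
  fixes N :: "'a::euclidean_space \<Rightarrow> real"
  assumes "is_norm N" shows "dual_norm N (- u) = dual_norm N u"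
proof (rule antisym)
  show "dual_norm N (- u) \<le> dual_norm N u"
  proof (rule dual_least[OF assms])
    fix x assume "N x = 1"
    then have "N (- x) = 1" by (simp add: norm_neg[OF assms])
    then have "u \<bullet> (- x) \<le> dual_norm N u" by (rule dual_ge[OF assms])
    then show "- u \<bullet> x \<le> dual_norm N u" by simp
  qed
  show "dual_norm N u \<le> dual_norm N (- u)"
  proof (rule dual_least[OF assms])
    fix x assume "N x = 1"
    then have "N (- x) = 1" by (simp add: norm_neg[OF assms])
    then have "(- u) \<bullet> (- x) \<le> dual_norm N (- u)" by (rule dual_ge[OF assms])
    then show "u \<bullet> x \<le> dual_norm N (- u)" by simp
  qed
qed

lemma dual_zero:
  fixes N :: "'a::euclidean_space \<Rightarrow> real"
  assumes "is_norm N" shows "dual_norm N 0 = 0"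
  using dual_scale[OF assms, of 0 0] by simp

lemma cone_add:
  assumes "cone K" "convex K" "a \<in> K" "b \<in> K" shows "a + b \<in> K"
proof -
  have "(1/2) *\<^sub>R a + (1/2) *\<^sub>R b \<in> K" using assms(2-4) unfolding convex_def by auto
  then have "2 *\<^sub>R ((1/2) *\<^sub>R a + (1/2) *\<^sub>R b) \<in> K" using assms(1) unfolding cone_def by auto
  then show ?thesis by (simp add: scaleR_add_right)
qed

lemma zero_not_int:
  fixes K :: "'a::euclidean_space set"
  assumes "regular_cone K" shows "0 \<notin> interior K"
proof
  assume "0 \<in> interior K"
  then obtain r where r: "r > 0" "ball 0 r \<subseteq> K" using mem_interior by blast
  obtain i :: 'a where i: "i \<in> Basis" using nonempty_Basis by blast
  define x where "x = (r/2) *\<^sub>R i"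
  have "x \<in> ball 0 r" "- x \<in> ball 0 r" using r(1) i by (auto simp: x_def)
  then have "x \<in> K" "- x \<in> K" using r(2) by auto
  have "x = - (- x)" by simp
  then have "x \<in> uminus ` K" using \<open>- x \<in> K\<close> by (rule image_eqI)
  then have "x \<in> K \<inter> uminus ` K" using \<open>x \<in> K\<close> by blast
  then have "x = 0" using assms unfolding regular_cone_def by auto
  then show False using r(1) i by (auto simp: x_def)
qed

lemma int_pos_gen:
  fixes u :: "'a::euclidean_space"
  assumes "\<forall>v\<in>C. 0 \<le> u \<bullet> v" "u \<noteq> 0" "p \<in> interior C" shows "u \<bullet> p > 0"
proof -
  obtain r where r: "r > 0" "ball p r \<subseteq> C" using assms(3) mem_interior by blast
  define q where "q = p - (r / 2 / norm u) *\<^sub>R u"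
  have "dist p q < r" using r(1) assms(2) by (simp add: q_def dist_norm)
  then have "q \<in> C" using r(2) by auto
  then have "0 \<le> u \<bullet> q" using assms(1) by auto
  also have "u \<bullet> q = u \<bullet> p - r / 2 * norm u"
    using assms(2) by (simp add: q_def inner_diff_right power2_norm_eq_inner[symmetric] power2_eq_square)
  finally show ?thesis using r(1) assms(2) by (smt (verit) divide_pos_pos mult_pos_pos zero_less_norm_iff)
qed

lemma sep:
  fixes M K :: "'a::euclidean_space set"
  assumes "subspace M" "convex K" "interior K \<noteq> {}" "M \<inter> interior K = {}"
  shows "\<exists>a. a \<noteq> 0 \<and> a \<in> orth_comp M \<and> a \<in> dual_cone K"
proof -
  define S where "S = (\<Union>x\<in>interior K. \<Union>y\<in>M. {x - y})"
  have "convex S" unfolding S_def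
    by (intro convex_differences convex_interior assms(2) subspace_imp_convex assms(1))
  moreover have "0 \<notin> S" using assms(4) unfolding S_def by auto
  ultimately obtain a where a: "a \<noteq> 0" "\<And>x. x \<in> S \<Longrightarrow> 0 \<le> a \<bullet> x"
    using separating_hyperplane_set_0 by blast
  obtain k where k: "k \<in> interior K" using assms(3) by blast
  have aM: "a \<bullet> l = 0" if "l \<in> M" for l
  proof (rule ccontr)
    assume ne: "a \<bullet> l \<noteq> 0"
    define c where "c = (a \<bullet> k + 1) / (a \<bullet> l)"
    have "c *\<^sub>R l \<in> M" using assms(1) that by (simp add: subspace_scale)
    then have "k - c *\<^sub>R l \<in> S" using k unfolding S_def by auto
    then have "0 \<le> a \<bullet> (k - c *\<^sub>R l)" by (rule a(2))
    also have "a \<bullet> (k - c *\<^sub>R l) = -1" using ne by (simp add: c_def inner_diff_right)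
    finally show False by simp
  qed
  have aint: "0 \<le> a \<bullet> x" if "x \<in> interior K" for x
  proof -
    have "x - 0 \<in> S" unfolding S_def using that subspace_0[OF assms(1)] by blast
    then show ?thesis using a(2) by fastforce
  qed
  have "closure (interior K) \<subseteq> {x. 0 \<le> a \<bullet> x}"
    by (rule closure_minimal) (auto simp: aint closed_Collect_le continuous_on_inner continuous_on_const continuous_on_id)
  moreover have "K \<subseteq> closure (interior K)"
    using convex_closure_interior[OF assms(2,3)] closure_subset by blast
  ultimately have "a \<in> dual_cone K" unfolding dual_cone_def by auto
  moreover have "a \<in> orth_comp M" unfolding orth_comp_def using aM by auto
  ultimately show ?thesis using a(1) by blast
qed




lemma hb:
  fixes M :: "'a::euclidean_space set" and N :: "'a \<Rightarrow> real"
  assumes M: "subspace M" and N: "is_norm N" and s: "s \<ge> 0" and c: "\<And>l. l \<in> M \<Longrightarrow> c \<bullet> l \<le> s * N l"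
  shows "\<exists>w. (\<forall>l\<in>M. w \<bullet> l = c \<bullet> l) \<and> (\<forall>x. w \<bullet> x \<le> s * N x)"
proof -
  define A :: "('a \<times> real) set" where "A = {(x - l, r - c \<bullet> l) | x l r. l \<in> M \<and> r > s * N x}"
  have memA: "(x - l, r - c \<bullet> l) \<in> A" if "l \<in> M" "r > s * N x" for x l r
    using that unfolding A_def by blast
  have "convex A"
    unfolding convex_def
  proof (intro ballI allI impI)
    fix p q and u v :: real
    assume p: "p \<in> A" and q: "q \<in> A" and uv: "0 \<le> u" "0 \<le> v" "u + v = 1"
    obtain x1 l1 r1 where 1: "p = (x1 - l1, r1 - c \<bullet> l1)" "l1 \<in> M" "r1 > s * N x1" using p unfolding A_def by blast
    obtain x2 l2 r2 where 2: "q = (x2 - l2, r2 - c \<bullet> l2)" "l2 \<in> M" "r2 > s * N x2" using q unfolding A_def by blast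
    have lM: "u *\<^sub>R l1 + v *\<^sub>R l2 \<in> M" using M 1(2) 2(2) by (simp add: subspace_add subspace_scale)
    have "s * N (u *\<^sub>R x1 + v *\<^sub>R x2) \<le> s * (u * N x1 + v * N x2)"
      using normD(4)[OF N, of "u *\<^sub>R x1" "v *\<^sub>R x2"] normD(3)[OF N] uv s
      by (intro mult_left_mono) auto
    also have "\<dots> = u * (s * N x1) + v * (s * N x2)" by (simp add: algebra_simps)
    also have "\<dots> < u * r1 + v * r2"
    proof -
      have "u * (s * N x1) \<le> u * r1" "v * (s * N x2) \<le> v * r2" using 1(3) 2(3) uv by (auto intro: mult_left_mono)
      moreover have "u > 0 \<or> v > 0" using uv by auto
      then have "u * (s * N x1) < u * r1 \<or> v * (s * N x2) < v * r2" using 1(3) 2(3) by auto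
      ultimately show ?thesis by linarith
    qed
    finally have "(u *\<^sub>R x1 + v *\<^sub>R x2 - (u *\<^sub>R l1 + v *\<^sub>R l2), (u * r1 + v * r2) - c \<bullet> (u *\<^sub>R l1 + v *\<^sub>R l2)) \<in> A"
      by (intro memA lM)
    moreover have "u *\<^sub>R p + v *\<^sub>R q = (u *\<^sub>R x1 + v *\<^sub>R x2 - (u *\<^sub>R l1 + v *\<^sub>R l2), (u * r1 + v * r2) - c \<bullet> (u *\<^sub>R l1 + v *\<^sub>R l2))"
      using 1(1) 2(1) by (simp add: algebra_simps inner_add_right)
    ultimately show "u *\<^sub>R p + v *\<^sub>R q \<in> A" by simp
  qed
  moreover have "0 \<notin> A"
  proof
    assume "0 \<in> A"
    then obtain x l r where "(0::'a \<times> real) = (x - l, r - c \<bullet> l)" "l \<in> M" "r > s * N x" unfolding A_def by blast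
    then have "x = l" "r = c \<bullet> l" by (auto simp: zero_prod_def)
    then show False using c[of l] \<open>l \<in> M\<close> \<open>r > s * N x\<close> by simp
  qed
  ultimately obtain p where p: "p \<noteq> 0" "\<And>y. y \<in> A \<Longrightarrow> 0 \<le> p \<bullet> y"
    using separating_hyperplane_set_0 by blast
  obtain a b where ab: "p = (a, b)" by (cases p)
  have P1: "0 \<le> a \<bullet> x + b * (s * N x + t)" if "t > 0" for x t
    using p(2)[OF memA[of 0 x "s * N x + t"]] that subspace_0[OF M] by (simp add: ab)
  have P2: "0 \<le> - (a \<bullet> l) + b * (1 - c \<bullet> l)" if "l \<in> M" for l
    using p(2)[OF memA[of l 0 1]] that normD(2)[OF N, of 0] by (simp add: ab inner_diff_right)
  have b0: "b \<ge> 0" using P2[OF subspace_0[OF M]] by simp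
  have "b \<noteq> 0"
  proof
    assume "b = 0"
    then have "0 \<le> a \<bullet> (- a)" using P1[of 1 "-a"] by simp
    then have "a \<bullet> a \<le> 0" by simp
    then have "a = 0" by (metis antisym inner_eq_zero_iff inner_ge_zero)
    with \<open>b = 0\<close> p(1) ab show False by (simp add: zero_prod_def)
  qed
  with b0 have bpos: "b > 0" by simp
  define w where "w = (- 1 / b) *\<^sub>R a"
  have "w \<bullet> l = c \<bullet> l" if "l \<in> M" for l
  proof -
    define q where "q = a \<bullet> l + b * (c \<bullet> l)"
    have "q = 0"
    proof (rule ccontr)
      assume "q \<noteq> 0"
      have kl: "(2 * b / q) *\<^sub>R l \<in> M" using M that by (simp add: subspace_scale)
      have eq: "- (a \<bullet> (k *\<^sub>R l)) + b * (1 - c \<bullet> (k *\<^sub>R l)) = b - k * q" for k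
        by (simp add: q_def algebra_simps)
      from P2[OF kl] have "0 \<le> b - (2 * b / q) * q" unfolding eq .
      then show False using \<open>q \<noteq> 0\<close> bpos by simp
    qed
    then show ?thesis using bpos by (simp add: w_def q_def field_simps)
  qed
  moreover have "w \<bullet> x \<le> s * N x" for x
  proof (rule ccontr)
    assume neg: "\<not> w \<bullet> x \<le> s * N x"
    define t where "t = (w \<bullet> x - s * N x) / 2"
    then have t: "t > 0" using neg by simp
    from P1[OF t, of x] have "0 \<le> a \<bullet> x + b * (s * N x + t)" .
    also have "a \<bullet> x = - b * (w \<bullet> x)" using bpos by (simp add: w_def)
    finally have 1: "0 \<le> b * (s * N x + t - w \<bullet> x)" by (simp add: algebra_simps)
    have "s * N x + t - w \<bullet> x = - t" by (simp add: t_def field_simps)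
    with 1 have "0 \<le> - (b * t)" by simp
    moreover have "b * t > 0" using bpos t by simp
    ultimately show False by linarith
  qed
  ultimately show ?thesis by blast
qed




lemma P_scale: "c *\<^sub>R (x + (t * (w \<bullet> x)) *\<^sub>R d) = c *\<^sub>R x + (t * (w \<bullet> (c *\<^sub>R x))) *\<^sub>R d"
  by (simp add: scaleR_add_right)

lemma crit_closed:
  fixes L K :: "'a::euclidean_space set"
  assumes L: "subspace L" and K: "closed K" "cone K"
  shows "closed {t\<in>{0..1}. \<exists>x\<in>L. x \<noteq> 0 \<and> x + (t * (w \<bullet> x)) *\<^sub>R d \<in> K}"
proof -
  define f :: "real \<times> 'a \<Rightarrow> 'a" where "f = (\<lambda>p. snd p + (fst p * (w \<bullet> snd p)) *\<^sub>R d)"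
  define C where "C = ({0..1::real} \<times> (L \<inter> sphere 0 1)) \<inter> f -` K"
  have "closed (f -` K)" unfolding f_def by (rule continuous_closed_vimage[OF K(1)]) (intro continuous_intros)
  moreover have "closed ({0..1::real} \<times> (L \<inter> sphere 0 1))"
    using closed_subspace[OF L] by (intro closed_Times closed_Int) auto
  ultimately have "closed C" unfolding C_def by blast
  moreover have "bounded C"
  proof (rule bounded_subset)
    show "bounded ({0..1::real} \<times> sphere (0::'a) 1)" by (intro bounded_Times) auto
    show "C \<subseteq> {0..1::real} \<times> sphere (0::'a) 1" unfolding C_def by auto
  qed
  ultimately have "compact C" by (simp add: compact_eq_bounded_closed)
  then have "compact (fst ` C)" by (intro compact_continuous_image continuous_intros)
  then have cl: "closed (fst ` C)" by (rule compact_imp_closed)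
  have "{t\<in>{0..1}. \<exists>x\<in>L. x \<noteq> 0 \<and> x + (t * (w \<bullet> x)) *\<^sub>R d \<in> K} = fst ` C"
  proof (rule set_eqI, rule iffI)
    fix t assume "t \<in> {t\<in>{0..1}. \<exists>x\<in>L. x \<noteq> 0 \<and> x + (t * (w \<bullet> x)) *\<^sub>R d \<in> K}"
    then obtain x where x: "t \<in> {0..1}" "x \<in> L" "x \<noteq> 0" "x + (t * (w \<bullet> x)) *\<^sub>R d \<in> K" by blast
    define y where "y = (1 / norm x) *\<^sub>R x"
    have "y \<in> L" using x(2) L by (simp add: y_def subspace_scale)
    moreover have "y \<in> sphere 0 1" using x(3) by (simp add: y_def)
    moreover have "f (t, y) \<in> K"
    proof -
      have "(1 / norm x) *\<^sub>R (x + (t * (w \<bullet> x)) *\<^sub>R d) \<in> K" using K(2) x(4) unfolding cone_def by simp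
      then show ?thesis unfolding f_def y_def P_scale by simp
    qed
    ultimately have "(t, y) \<in> C" using x(1) unfolding C_def by simp
    then show "t \<in> fst ` C" by force
  next
    fix t assume "t \<in> fst ` C"
    then obtain y where "(t, y) \<in> C" by force
    then have "t \<in> {0..1}" "y \<in> L" "y \<noteq> 0" "y + (t * (w \<bullet> y)) *\<^sub>R d \<in> K"
      unfolding C_def f_def by auto
    then show "t \<in> {t\<in>{0..1}. \<exists>x\<in>L. x \<noteq> 0 \<and> x + (t * (w \<bullet> x)) *\<^sub>R d \<in> K}"
      by blast
  qed
  with cl show ?thesis by simp
qed

lemma crit_open:
  fixes K :: "'a::euclidean_space set"
  assumes "x + (t * (w \<bullet> x)) *\<^sub>R d \<in> interior K"
  shows "\<exists>\<delta>>0. \<forall>t'. \<bar>t' - t\<bar> < \<delta> \<longrightarrow> x + (t' * (w \<bullet> x)) *\<^sub>R d \<in> interior K"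
proof -
  obtain r where r: "r > 0" "ball (x + (t * (w \<bullet> x)) *\<^sub>R d) r \<subseteq> interior K"
    using assms open_contains_ball open_interior by blast
  define \<delta> where "\<delta> = r / (\<bar>w \<bullet> x\<bar> * norm d + 1)"
  have den: "\<bar>w \<bullet> x\<bar> * norm d + 1 > 0" by (simp add: add_nonneg_pos)
  have "x + (t' * (w \<bullet> x)) *\<^sub>R d \<in> interior K" if "\<bar>t' - t\<bar> < \<delta>" for t'
  proof -
    have "dist (x + (t * (w \<bullet> x)) *\<^sub>R d) (x + (t' * (w \<bullet> x)) *\<^sub>R d) = \<bar>t' - t\<bar> * (\<bar>w \<bullet> x\<bar> * norm d)"
    proof -
      have "(x + (t * (w \<bullet> x)) *\<^sub>R d) - (x + (t' * (w \<bullet> x)) *\<^sub>R d) = ((t - t') * (w \<bullet> x)) *\<^sub>R d"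
        by (simp add: algebra_simps)
      then show ?thesis by (simp add: dist_norm abs_mult abs_minus_commute)
    qed
    also have "\<dots> \<le> \<bar>t' - t\<bar> * (\<bar>w \<bullet> x\<bar> * norm d + 1)" by (simp add: mult_left_mono)
    also have "\<dots> < \<delta> * (\<bar>w \<bullet> x\<bar> * norm d + 1)" using that den by (intro mult_strict_right_mono) auto
    also have "\<dots> = r" using den by (simp add: \<delta>_def)
    finally show ?thesis using r(2) by auto
  qed
  moreover have "\<delta> > 0" using r(1) den by (simp add: \<delta>_def)
  ultimately show ?thesis by blast
qed

lemma critA:
  fixes L K :: "'a::euclidean_space set"
  assumes L: "subspace L" and K: "closed K" "cone K" "0 \<notin> interior K"
    and inj: "\<And>t x. t \<in> {0..1} \<Longrightarrow> x \<in> L \<Longrightarrow> x + (t * (w \<bullet> x)) *\<^sub>R d = 0 \<Longrightarrow> x = 0"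
    and start: "L \<inter> interior K \<noteq> {}"
    and fin: "(\<lambda>x. x + (w \<bullet> x) *\<^sub>R d) ` L \<inter> interior K = {}"
  shows "\<exists>t\<in>{0..1}. (\<lambda>x. x + (t * (w \<bullet> x)) *\<^sub>R d) ` L \<inter> interior K = {}
                 \<and> (\<lambda>x. x + (t * (w \<bullet> x)) *\<^sub>R d) ` L \<inter> K \<noteq> {0}"
proof -
  define S where "S = {t\<in>{0..1}. (\<lambda>x. x + (t * (w \<bullet> x)) *\<^sub>R d) ` L \<inter> interior K = {}}"
  define T where "T = {t\<in>{0..1::real}. \<exists>x\<in>L. x \<noteq> 0 \<and> x + (t * (w \<bullet> x)) *\<^sub>R d \<in> K}"
  have 1: "1 \<in> S" using fin unfolding S_def by simp
  have bdd: "bdd_below S" by (rule bdd_belowI[of _ 0]) (auto simp: S_def)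
  define t0 where "t0 = Inf S"
  have t0le: "t0 \<le> t" if "t \<in> S" for t unfolding t0_def using that bdd by (rule cInf_lower)
  have Sne: "S \<noteq> {}" using 1 by blast
  have t0ge: "0 \<le> t0" unfolding t0_def by (rule cInf_greatest[OF Sne]) (auto simp: S_def)
  have t01: "t0 \<le> 1" using t0le[OF 1] .
  have t0S: "t0 \<in> S"
  proof (rule ccontr)
    assume "t0 \<notin> S"
    then obtain x where x: "x \<in> L" "x + (t0 * (w \<bullet> x)) *\<^sub>R d \<in> interior K"
      using t0ge t01 unfolding S_def by auto
    obtain \<delta> where \<delta>: "\<delta> > 0" "\<And>t'. \<bar>t' - t0\<bar> < \<delta> \<Longrightarrow> x + (t' * (w \<bullet> x)) *\<^sub>R d \<in> interior K"
      using crit_open[OF x(2)] by blast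
    have "t0 + \<delta> \<le> t" if "t \<in> S" for t
    proof (rule ccontr)
      assume "\<not> t0 + \<delta> \<le> t"
      then have "\<bar>t - t0\<bar> < \<delta>" using t0le[OF that] by simp
      then have "x + (t * (w \<bullet> x)) *\<^sub>R d \<in> interior K" by (rule \<delta>(2))
      then show False using that x(1) unfolding S_def by auto
    qed
    then have "t0 + \<delta> \<le> t0" unfolding t0_def using 1 by (intro cInf_greatest) auto
    then show False using \<delta>(1) by simp
  qed
  have t0pos: "t0 > 0"
  proof (rule ccontr)
    assume "\<not> t0 > 0"
    then have "t0 = 0" using t0ge by simp
    then have "L \<inter> interior K = {}" using t0S unfolding S_def by simp
    then show False using start by simp
  qed
  have sub: "{0..<t0} \<subseteq> T"
  proof
    fix t assume t: "t \<in> {0..<t0}"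
    then have "t \<notin> S" using t0le by force
    moreover have "t \<in> {0..1}" using t t01 by simp
    ultimately obtain x where x: "x \<in> L" "x + (t * (w \<bullet> x)) *\<^sub>R d \<in> interior K" unfolding S_def by auto
    have "x \<noteq> 0" using x(2) K(3) by auto
    then show "t \<in> T" unfolding T_def using x \<open>t \<in> {0..1}\<close> interior_subset by blast
  qed
  have "closed T" unfolding T_def by (rule crit_closed[OF L K(1,2)])
  then have "closure {0..<t0} \<subseteq> T" using sub by (simp add: closure_minimal)
  moreover have "t0 \<in> closure {0..<t0}" using t0pos by simp
  ultimately have "t0 \<in> T" by blast
  then obtain x where x: "x \<in> L" "x \<noteq> 0" "x + (t0 * (w \<bullet> x)) *\<^sub>R d \<in> K" unfolding T_def by blast
  have "x + (t0 * (w \<bullet> x)) *\<^sub>R d \<noteq> 0" using inj[of t0 x] x t0ge t01 by auto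
  then have "(\<lambda>x. x + (t0 * (w \<bullet> x)) *\<^sub>R d) ` L \<inter> K \<noteq> {0}" using x by blast
  moreover have "(\<lambda>x. x + (t0 * (w \<bullet> x)) *\<^sub>R d) ` L \<inter> interior K = {}" using t0S unfolding S_def by simp
  moreover have "t0 \<in> {0..1}" using t0ge t01 by simp
  ultimately show ?thesis by blast
qed

lemma critB:
  fixes L K :: "'a::euclidean_space set"
  assumes L: "subspace L" and K: "closed K" "cone K" "0 \<notin> interior K"
    and inj: "\<And>t x. t \<in> {0..1} \<Longrightarrow> x \<in> L \<Longrightarrow> x + (t * (w \<bullet> x)) *\<^sub>R d = 0 \<Longrightarrow> x = 0"
    and LK: "L \<inter> K = {0}"
    and fin: "\<exists>x\<in>L. x \<noteq> 0 \<and> x + (w \<bullet> x) *\<^sub>R d \<in> K"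
  shows "\<exists>t\<in>{0..1}. (\<lambda>x. x + (t * (w \<bullet> x)) *\<^sub>R d) ` L \<inter> interior K = {}
                 \<and> (\<lambda>x. x + (t * (w \<bullet> x)) *\<^sub>R d) ` L \<inter> K \<noteq> {0}"
proof -
  define T where "T = {t\<in>{0..1::real}. \<exists>x\<in>L. x \<noteq> 0 \<and> x + (t * (w \<bullet> x)) *\<^sub>R d \<in> K}"
  have 1: "1 \<in> T" using fin unfolding T_def by simp
  have bdd: "bdd_below T" by (rule bdd_belowI[of _ 0]) (auto simp: T_def)
  have "closed T" unfolding T_def by (rule crit_closed[OF L K(1,2)])
  define t0 where "t0 = Inf T"
  have t0T: "t0 \<in> T" unfolding t0_def using 1 bdd \<open>closed T\<close> by (intro closed_contains_Inf) auto
  have t0le: "t0 \<le> t" if "t \<in> T" for t unfolding t0_def using that bdd by (rule cInf_lower)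
  have t01: "t0 \<in> {0..1}" using t0T unfolding T_def by simp
  obtain x where x: "x \<in> L" "x \<noteq> 0" "x + (t0 * (w \<bullet> x)) *\<^sub>R d \<in> K" using t0T unfolding T_def by blast
  have "x + (t0 * (w \<bullet> x)) *\<^sub>R d \<noteq> 0" using inj[of t0 x] x t01 by auto
  then have A: "(\<lambda>x. x + (t0 * (w \<bullet> x)) *\<^sub>R d) ` L \<inter> K \<noteq> {0}" using x by blast
  have B: "(\<lambda>x. x + (t0 * (w \<bullet> x)) *\<^sub>R d) ` L \<inter> interior K = {}"
  proof (rule ccontr)
    assume "\<not> ?thesis"
    then obtain y where y: "y \<in> L" "y + (t0 * (w \<bullet> y)) *\<^sub>R d \<in> interior K" by auto
    have y0: "y \<noteq> 0" using y(2) K(3) by auto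
    have "t0 \<noteq> 0"
    proof
      assume "t0 = 0"
      then have "y \<in> L \<inter> K" using y interior_subset by auto
      then show False using LK y0 by auto
    qed
    then have t0pos: "t0 > 0" using t01 by simp
    obtain \<delta> where \<delta>: "\<delta> > 0" "\<And>t'. \<bar>t' - t0\<bar> < \<delta> \<Longrightarrow> y + (t' * (w \<bullet> y)) *\<^sub>R d \<in> interior K"
      using crit_open[OF y(2)] by blast
    define t where "t = max 0 (t0 - \<delta> / 2)"
    have "\<bar>t - t0\<bar> < \<delta>" using \<delta>(1) t0pos by (simp add: t_def)
    then have "y + (t * (w \<bullet> y)) *\<^sub>R d \<in> K" using \<delta>(2) interior_subset by blast
    moreover have "t \<in> {0..1}" using t01 \<delta>(1) by (simp add: t_def)
    ultimately have "t \<in> T" unfolding T_def using y(1) y0 by blast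
    then have "t0 \<le> t" by (rule t0le)
    then show False using \<delta>(1) t0pos by (simp add: t_def)
  qed
  show ?thesis using A B t01 by blast
qed




lemma P_linear: "linear (\<lambda>x. x + (t * (w \<bullet> x)) *\<^sub>R d)"
  by (rule linearI) (simp_all add: algebra_simps inner_add_right scaleR_add_left)

lemma image_Gr:
  fixes L :: "'a::euclidean_space set"
  assumes "L \<in> Gr m" "\<And>x. x \<in> L \<Longrightarrow> x + (t * (w \<bullet> x)) *\<^sub>R d = 0 \<Longrightarrow> x = 0"
  shows "(\<lambda>x. x + (t * (w \<bullet> x)) *\<^sub>R d) ` L \<in> Gr m"
proof -
  let ?f = "\<lambda>x. x + (t * (w \<bullet> x)) *\<^sub>R d"
  have L: "subspace L" "dim L = m" using assms(1) unfolding Gr_def by auto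
  have lin: "linear ?f" by (rule P_linear)
  have "subspace (?f ` L)" by (rule linear_subspace_image[OF lin L(1)])
  moreover have "inj_on ?f (span L)"
  proof (rule inj_onI)
    fix x y assume xy: "x \<in> span L" "y \<in> span L" "?f x = ?f y"
    have "span L = L" using L(1) by (simp add: span_eq_iff)
    have "x \<in> L" "y \<in> L" using xy(1,2) \<open>span L = L\<close> by auto
    then have "x - y \<in> L" using L(1) subspace_diff by blast
    moreover have "?f (x - y) = 0" using xy(3) linear_diff[OF lin, of x y] by simp
    ultimately have "x - y = 0" using assms(2) by blast
    then show "x = y" by simp
  qed
  then have "dim (?f ` L) = dim L" by (rule dim_image_eq[OF lin])
  ultimately show ?thesis using L unfolding Gr_def by simp
qed




lemma dual_pos:
  fixes N :: "'a::euclidean_space \<Rightarrow> real"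
  assumes "is_norm N" "u \<noteq> 0" shows "dual_norm N u > 0"
proof -
  have "N u > 0" using normD(1,2)[OF assms(1), of u] assms(2) by auto
  have "u \<bullet> ((1 / N u) *\<^sub>R u) \<le> dual_norm N u" by (rule dual_ge[OF assms(1) unit_in_subspace[OF assms]])
  moreover have "u \<bullet> ((1 / N u) *\<^sub>R u) > 0" using \<open>N u > 0\<close> assms(2) by simp
  ultimately show ?thesis by linarith
qed

lemma normalize_dual:
  fixes N :: "'a::euclidean_space \<Rightarrow> real"
  assumes "is_norm N" "u \<noteq> 0" shows "dual_norm N ((1 / dual_norm N u) *\<^sub>R u) = 1"
  using dual_scale[OF assms(1), of "1 / dual_norm N u" u] dual_pos[OF assms] by simp

lemma dual_cone_scale: "u \<in> dual_cone K \<Longrightarrow> c \<ge> 0 \<Longrightarrow> c *\<^sub>R u \<in> dual_cone K"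
  unfolding dual_cone_def by auto

lemma Gr_nonzero:
  fixes L :: "'a::euclidean_space set"
  assumes "L \<in> Gr m" "1 \<le> m" shows "\<exists>x\<in>L. x \<noteq> 0"
proof (rule ccontr)
  assume "\<not> ?thesis"
  then have "L \<subseteq> {0}" by auto
  then have "dim L = 0" by simp
  moreover have "dim L = m" using assms(1) unfolding Gr_def by simp
  ultimately have "m = 0" by simp
  then show False using assms(2) by simp
qed

lemma exists_dual_nonzero:
  fixes K :: "'a::euclidean_space set"
  assumes "regular_cone K" shows "\<exists>a. a \<noteq> 0 \<and> a \<in> dual_cone K"
proof -
  have "subspace {0::'a}" by (simp add: subspace_0 subspace_single_0)
  moreover have "{0} \<inter> interior K = {}" using zero_not_int[OF assms] by auto
  moreover have "convex K" "interior K \<noteq> {}" using assms unfolding regular_cone_def by auto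
  ultimately obtain a where "a \<noteq> 0" "a \<in> orth_comp {0}" "a \<in> dual_cone K" using sep by metis
  then show ?thesis by blast
qed

lemma inf_nonneg:
  fixes N1 N2 :: "'a::euclidean_space \<Rightarrow> real"
  assumes "is_norm N1" "is_norm N2" "x \<noteq> 0" "L' \<noteq> {}"
  shows "0 \<le> (INF v\<in>L'. N2 (x - v) / N1 x)"
proof (rule cINF_greatest[OF assms(4)])
  fix v show "0 \<le> N2 (x - v) / N1 x" using normD(1)[OF assms(1)] normD(1)[OF assms(2)] by simp
qed

lemma sd_bdd:
  fixes N1 N2 :: "'a::euclidean_space \<Rightarrow> real"
  assumes "is_norm N1" "is_norm N2" "0 \<in> L'"
  shows "bdd_above ((\<lambda>x. INF v\<in>L'. N2 (x - v) / N1 x) ` (L - {0}))"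
proof -
  obtain C where C: "C > 0" "\<And>x. N2 x \<le> C * N1 x" using norm_equiv[OF assms(1,2)] by blast
  have "(INF v\<in>L'. N2 (x - v) / N1 x) \<le> C" if "x \<noteq> 0" for x
  proof -
    have pos: "N1 x > 0" using normD(1,2)[OF assms(1), of x] that by auto
    have bb: "bdd_below ((\<lambda>v. N2 (x - v) / N1 x) ` L')"
      by (rule bdd_belowI2[where m=0]) (simp add: normD(1)[OF assms(1)] normD(1)[OF assms(2)])
    have "(INF v\<in>L'. N2 (x - v) / N1 x) \<le> N2 (x - 0) / N1 x"
      by (rule cINF_lower[OF bb assms(3)])
    also have "\<dots> \<le> C" using C(2)[of x] pos by (simp add: field_simps)
    finally show ?thesis .
  qed
  then show ?thesis by (rule bdd_aboveI2[where M=C]) simp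
qed

lemma partA:
  fixes K L :: "'a::euclidean_space set" and N1 N2 :: "'a \<Rightarrow> real"
  assumes K: "regular_cone K" and N1: "is_norm N1" and N2: "is_norm N2"
    and m: "1 \<le> m" "m < DIM('a)" and LG: "L \<in> Gr m" and start: "L \<inter> interior K \<noteq> {}"
  shows "dist_to_Sigma N1 N2 K m L = nu N1 N2 K L"
proof -
  have L: "subspace L" "dim L = m" using LG unfolding Gr_def by auto
  have Kc: "closed K" "convex K" "cone K" "interior K \<noteq> {}" using K unfolding regular_cone_def by auto
  have K0: "0 \<notin> interior K" by (rule zero_not_int[OF K])
  define NS where "NS = {dual_norm N1 (y - u) | u y. u \<in> dual_cone K \<and> y \<in> orth_comp L \<and> dual_norm N2 u = 1}"
  have nueq: "nu N1 N2 K L = Inf NS" by (simp add: nu_def NS_def)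
  have NSbdd: "bdd_below NS" unfolding NS_def using dual_nonneg[OF N1] by (intro bdd_belowI[of _ 0]) auto
  have NSne: "NS \<noteq> {}"
  proof -
    obtain a where a: "a \<noteq> 0" "a \<in> dual_cone K" using exists_dual_nonzero[OF K] by blast
    have "(1 / dual_norm N2 a) *\<^sub>R a \<in> dual_cone K"
      using a dual_pos[OF N2 a(1)] by (intro dual_cone_scale) auto
    moreover have "(0::'a) \<in> orth_comp L" unfolding orth_comp_def by simp
    ultimately have "dual_norm N1 (0 - (1 / dual_norm N2 a) *\<^sub>R a) \<in> NS"
      unfolding NS_def using normalize_dual[OF N2 a(1)] by blast
    then show ?thesis by blast
  qed
  have NSnn: "0 \<le> Inf NS" using NSne unfolding NS_def using dual_nonneg[OF N1] by (intro cInf_greatest) auto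
  obtain x0 where x0: "x0 \<in> L" "x0 \<noteq> 0" using Gr_nonzero[OF LG m(1)] by blast
  have Lne: "L - {0} \<noteq> {}" using x0 by blast

  have lower: "Inf NS \<le> sdist N1 N2 L L'" if L'S: "L' \<in> Sigma_ill K m" for L'
  proof -
    have L'G: "L' \<in> Gr m" and "orth_comp L' \<inter> dual_cone K \<noteq> {0}" using L'S unfolding Sigma_ill_def by auto
    moreover have "0 \<in> orth_comp L' \<inter> dual_cone K" unfolding orth_comp_def dual_cone_def by simp
    ultimately obtain u0 where u0: "u0 \<in> orth_comp L'" "u0 \<in> dual_cone K" "u0 \<noteq> 0" by blast
    have L'sub: "subspace L'" using L'G unfolding Gr_def by simp
    have L'0: "0 \<in> L'" using subspace_0[OF L'sub] .
    define u where "u = (1 / dual_norm N2 u0) *\<^sub>R u0"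
    have u1: "dual_norm N2 u = 1" unfolding u_def by (rule normalize_dual[OF N2 u0(3)])
    have uK: "u \<in> dual_cone K" unfolding u_def using u0 dual_pos[OF N2 u0(3)] by (intro dual_cone_scale) auto
    have uL': "u \<bullet> v = 0" if "v \<in> L'" for v using u0(1) that unfolding u_def orth_comp_def by simp
    define s where "s = sdist N1 N2 L L'"
    have bdd: "bdd_above ((\<lambda>x. INF v\<in>L'. N2 (x - v) / N1 x) ` (L - {0}))" by (rule sd_bdd[OF N1 N2 L'0])
    have le_s: "(INF v\<in>L'. N2 (x - v) / N1 x) \<le> s" if "x \<in> L" "x \<noteq> 0" for x
      unfolding s_def sdist_def using that bdd by (intro cSUP_upper) auto
    have s0: "0 \<le> s" using le_s[OF x0] inf_nonneg[OF N1 N2 x0(2), of L'] L'0 by force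
    have bound: "u \<bullet> l \<le> s * N1 l" if "l \<in> L" for l
    proof (cases "l = 0")
      case True then show ?thesis using normD(2)[OF N1, of 0] by simp
    next
      case False
      have pos: "N1 l > 0" using normD(1,2)[OF N1, of l] False by auto
      have "u \<bullet> l / N1 l \<le> (INF v\<in>L'. N2 (l - v) / N1 l)"
      proof (rule cINF_greatest)
        show "L' \<noteq> {}" using L'0 by blast
        fix v assume "v \<in> L'"
        have "u \<bullet> l = u \<bullet> (l - v)" using uL'[OF \<open>v \<in> L'\<close>] by (simp add: inner_diff_right)
        also have "\<dots> \<le> dual_norm N2 u * N2 (l - v)" by (rule dual_le[OF N2])
        finally show "u \<bullet> l / N1 l \<le> N2 (l - v) / N1 l" using u1 pos by (simp add: divide_right_mono)
      qed
      also have "\<dots> \<le> s" by (rule le_s[OF that False])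
      finally show ?thesis using pos by (simp add: field_simps)
    qed
    obtain w where w: "\<And>l. l \<in> L \<Longrightarrow> w \<bullet> l = u \<bullet> l" "\<And>x. w \<bullet> x \<le> s * N1 x"
      using hb[OF L(1) N1 s0 bound] by blast
    have yL: "u - w \<in> orth_comp L" unfolding orth_comp_def using w(1) by (simp add: inner_diff_left)
    have "dual_norm N1 ((u - w) - u) \<in> NS" unfolding NS_def using uK yL u1 by blast
    then have "Inf NS \<le> dual_norm N1 ((u - w) - u)" using NSbdd by (rule cInf_lower)
    also have "dual_norm N1 ((u - w) - u) \<le> s"
    proof -
      have "dual_norm N1 ((u - w) - u) = dual_norm N1 (- w)" by simp
      also have "\<dots> \<le> s"
      proof (rule dual_least[OF N1])
        fix x assume "N1 x = 1"
        have "w \<bullet> (- x) \<le> s * N1 (- x)" by (rule w(2))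
        then show "- w \<bullet> x \<le> s" using \<open>N1 x = 1\<close> norm_neg[OF N1, of x] by simp
      qed
      finally show ?thesis .
    qed
    finally show ?thesis unfolding s_def .
  qed

  have upper: "\<exists>L'\<in>Sigma_ill K m. sdist N1 N2 L L' \<le> (Inf NS + e) * (1 + e)" if e: "e > 0" for e
  proof -
    obtain D where "D \<in> NS" "D < Inf NS + e" using cInf_lessD[OF NSne, of "Inf NS + e"] e by auto
    then obtain u y where uy: "u \<in> dual_cone K" "y \<in> orth_comp L" "dual_norm N2 u = 1" "D = dual_norm N1 (y - u)"
      and D: "D < Inf NS + e" unfolding NS_def by blast
    have u0: "u \<noteq> 0" using uy(3) dual_zero[OF N2] by auto
    have D0: "0 \<le> D" using uy(4) dual_nonneg[OF N1] by simp
    have ux: "\<bar>u \<bullet> x\<bar> \<le> D * N1 x" if "x \<in> L" for x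
    proof -
      have yx: "y \<bullet> x' = 0" if "x' \<in> L" for x' using uy(2) that unfolding orth_comp_def by auto
      have dd: "dual_norm N1 (u - y) = D" using uy(4) dual_neg[OF N1, of "y - u"] by simp
      have "u \<bullet> x = (u - y) \<bullet> x" using yx[OF that] by (simp add: inner_diff_left)
      also have "\<dots> \<le> D * N1 x" using dual_le[OF N1, of "u - y" x] dd by simp
      finally have 1: "u \<bullet> x \<le> D * N1 x" .
      have "-x \<in> L" using that L(1) by (simp add: subspace_neg)
      have "u \<bullet> (- x) = (u - y) \<bullet> (- x)" using yx[OF \<open>-x \<in> L\<close>] by (simp add: inner_diff_left)
      also have "\<dots> \<le> D * N1 (- x)" using dual_le[OF N1, of "u - y" "- x"] dd by simp
      finally have 2: "- (u \<bullet> x) \<le> D * N1 x" using norm_neg[OF N1, of x] by simp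
      from 1 2 show ?thesis by linarith
    qed
    obtain x1 where x1: "N2 x1 = 1" "u \<bullet> x1 > dual_norm N2 u - e / (1 + e)"
      using dual_approx[OF N2, of "e / (1 + e)" u] e by auto
    have ux1: "u \<bullet> x1 > 1 / (1 + e)" using x1(2) uy(3) e by (simp add: field_simps)
    have ux1p: "u \<bullet> x1 > 0" using ux1 e by (smt (verit) divide_pos_pos)
    define z1 where "z1 = (1 / (u \<bullet> x1)) *\<^sub>R x1"
    have uz1: "u \<bullet> z1 = 1" using ux1p by (simp add: z1_def)
    have Nz1: "N2 z1 < 1 + e"
    proof -
      have "N2 z1 = 1 / (u \<bullet> x1)" using normD(3)[OF N2] x1(1) ux1p by (simp add: z1_def)
      also have "\<dots> < 1 + e" using ux1 ux1p e by (simp add: field_simps)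
      finally show ?thesis .
    qed
    obtain z where z: "u \<bullet> z = 1" "N2 z \<le> 1 + e" "z \<notin> L"
    proof (cases "z1 \<in> L")
      case False then show ?thesis using that uz1 Nz1 by auto
    next
      case True
      obtain e' where e': "u \<bullet> e' = 0" "e' \<notin> L"
      proof (rule ccontr)
        assume "\<not> thesis"
        then have sub: "{x. u \<bullet> x = 0} \<subseteq> L" using that by blast
        have "dim {x. u \<bullet> x = 0} = DIM('a) - 1" by (rule dim_hyperplane[OF u0])
        then have "dim L \<le> dim {x. u \<bullet> x = 0}" using L(2) m(2) by simp
        then have "{x. u \<bullet> x = 0} = L" using sub L(1)
          by (intro subspace_dim_equal) (auto simp: subspace_hyperplane)
        then have "u \<bullet> z1 = 0" using True by blast
        then show False using uz1 by simp
      qed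
      define \<eta> where "\<eta> = (1 + e - N2 z1) / (N2 e' + 1)"
      have Ne': "N2 e' \<ge> 0" by (rule normD(1)[OF N2])
      have \<eta>: "\<eta> > 0" using Nz1 Ne' by (simp add: \<eta>_def)
      have "N2 (z1 + \<eta> *\<^sub>R e') \<le> N2 z1 + \<eta> * N2 e'"
        using normD(4)[OF N2, of z1 "\<eta> *\<^sub>R e'"] normD(3)[OF N2, of \<eta> e'] \<eta> by simp
      also have "\<dots> \<le> N2 z1 + \<eta> * (N2 e' + 1)" using \<eta> by simp
      also have "\<dots> = 1 + e" using Ne' by (simp add: \<eta>_def)
      finally have 1: "N2 (z1 + \<eta> *\<^sub>R e') \<le> 1 + e" .
      have 2: "u \<bullet> (z1 + \<eta> *\<^sub>R e') = 1" using uz1 e'(1) by (simp add: inner_add_right)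
      have 3: "z1 + \<eta> *\<^sub>R e' \<notin> L"
      proof
        assume "z1 + \<eta> *\<^sub>R e' \<in> L"
        then have "(z1 + \<eta> *\<^sub>R e') - z1 \<in> L" using True L(1) subspace_diff by blast
        then have "\<eta> *\<^sub>R e' \<in> L" by simp
        then have "(1 / \<eta>) *\<^sub>R (\<eta> *\<^sub>R e') \<in> L" by (rule subspace_scale[OF L(1)])
        then show False using e'(2) \<eta> by simp
      qed
      show ?thesis using that[OF 2 1 3] .
    qed
    have inj: "x = 0" if "x \<in> L" "x + (t * (u \<bullet> x)) *\<^sub>R (- z) = 0" for t x
    proof (rule ccontr)
      assume "x \<noteq> 0"
      define c where "c = t * (u \<bullet> x)"
      have xe: "x = c *\<^sub>R z" using that(2) unfolding c_def by (simp add: algebra_simps eq_neg_iff_add_eq_0)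
      then have c: "c \<noteq> 0" using \<open>x \<noteq> 0\<close> by auto
      have "(1 / c) *\<^sub>R x = z" using c by (simp add: xe)
      then have "z \<in> L" using subspace_scale[OF L(1) that(1), of "1 / c"] by simp
      then show False using z(3) by simp
    qed
    have fin: "(\<lambda>x. x + (u \<bullet> x) *\<^sub>R (- z)) ` L \<inter> interior K = {}"
    proof (rule ccontr)
      assume "\<not> ?thesis"
      then obtain x where "x \<in> L" and xi: "x + (u \<bullet> x) *\<^sub>R (- z) \<in> interior K" by auto
      have Kp: "\<forall>v\<in>K. 0 \<le> u \<bullet> v" using uy(1) unfolding dual_cone_def by auto
      have "u \<bullet> (x + (u \<bullet> x) *\<^sub>R (- z)) > 0" by (rule int_pos_gen[OF Kp u0 xi])
      moreover have "u \<bullet> (x + (u \<bullet> x) *\<^sub>R (- z)) = 0" using z(1) by (simp add: inner_add_right inner_diff_right)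
      ultimately show False by simp
    qed
    obtain t where t: "t \<in> {0..1}"
      and A: "(\<lambda>x. x + (t * (u \<bullet> x)) *\<^sub>R (- z)) ` L \<inter> interior K = {}"
      and B: "(\<lambda>x. x + (t * (u \<bullet> x)) *\<^sub>R (- z)) ` L \<inter> K \<noteq> {0}"
    proof -
      have inj': "x = 0" if "t \<in> {0..1}" "x \<in> L" "x + (t * (u \<bullet> x)) *\<^sub>R (- z) = 0" for t x
        using inj[OF that(2,3)] .
      from critA[OF L(1) Kc(1,3) K0 inj' start fin] obtain t where
        "t \<in> {0..1}" and AB: "(\<lambda>x. x + (t * (u \<bullet> x)) *\<^sub>R (- z)) ` L \<inter> interior K = {}
                 \<and> (\<lambda>x. x + (t * (u \<bullet> x)) *\<^sub>R (- z)) ` L \<inter> K \<noteq> {0}" by (rule bexE)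
      then show ?thesis using that by (elim conjE)
    qed
    define L' where "L' = (\<lambda>x. x + (t * (u \<bullet> x)) *\<^sub>R (- z)) ` L"
    have L'G: "L' \<in> Gr m" unfolding L'_def by (rule image_Gr[OF LG inj]) 
    then have L'sub: "subspace L'" unfolding Gr_def by simp
    have A': "L' \<inter> interior K = {}" using A unfolding L'_def .
    have B': "L' \<inter> K \<noteq> {0}" using B unfolding L'_def .
    obtain a where "a \<noteq> 0" "a \<in> orth_comp L'" "a \<in> dual_cone K"
      using sep[OF L'sub Kc(2,4) A'] by blast
    then have "orth_comp L' \<inter> dual_cone K \<noteq> {0}" by blast
    then have L'S: "L' \<in> Sigma_ill K m" using L'G B' unfolding Sigma_ill_def by blast
    have "sdist N1 N2 L L' \<le> D * (1 + e)"
      unfolding sdist_def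
    proof (rule cSUP_least[OF Lne])
      fix x assume x: "x \<in> L - {0}"
      have pos: "N1 x > 0" using normD(1,2)[OF N1, of x] x by auto
      have bb: "bdd_below ((\<lambda>v. N2 (x - v) / N1 x) ` L')"
        by (rule bdd_belowI2[where m=0]) (simp add: normD(1)[OF N1] normD(1)[OF N2])
      have mem: "x + (t * (u \<bullet> x)) *\<^sub>R (- z) \<in> L'" using x unfolding L'_def by blast
      have "(INF v\<in>L'. N2 (x - v) / N1 x) \<le> N2 (x - (x + (t * (u \<bullet> x)) *\<^sub>R (- z))) / N1 x"
        by (rule cINF_lower[OF bb mem])
      also have "N2 (x - (x + (t * (u \<bullet> x)) *\<^sub>R (- z))) = \<bar>t\<bar> * \<bar>u \<bullet> x\<bar> * N2 z"
        using normD(3)[OF N2, of "t * (u \<bullet> x)" z] by (simp add: abs_mult)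
      finally have 1: "(INF v\<in>L'. N2 (x - v) / N1 x) \<le> \<bar>t\<bar> * \<bar>u \<bullet> x\<bar> * N2 z / N1 x" .
      have num: "\<bar>t\<bar> * \<bar>u \<bullet> x\<bar> * N2 z \<le> 1 * (D * N1 x) * (1 + e)"
        using t ux[of x] x z(2) normD(1)[OF N2, of z]
        by (intro mult_mono) auto
      have "\<bar>t\<bar> * \<bar>u \<bullet> x\<bar> * N2 z / N1 x \<le> (1 * (D * N1 x) * (1 + e)) / N1 x"
        by (rule divide_right_mono[OF num]) (use pos in simp)
      also have "(1 * (D * N1 x) * (1 + e)) / N1 x = D * (1 + e)" using pos by simp
      finally show "(INF v\<in>L'. N2 (x - v) / N1 x) \<le> D * (1 + e)" using 1 by linarith
    qed
    also have "\<dots> \<le> (Inf NS + e) * (1 + e)" using D e by (intro mult_right_mono) auto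
    finally show ?thesis using L'S by blast
  qed

  have Sne: "Sigma_ill K m \<noteq> {}" using upper[of 1] by auto
  have "dist_to_Sigma N1 N2 K m L = Inf NS"
  proof (rule antisym)
    show "Inf NS \<le> dist_to_Sigma N1 N2 K m L"
      unfolding dist_to_Sigma_def by (rule cINF_greatest[OF Sne lower])
  next
    show "dist_to_Sigma N1 N2 K m L \<le> Inf NS"
    proof (rule ccontr)
      assume neg: "\<not> dist_to_Sigma N1 N2 K m L \<le> Inf NS"
      define g where "g = dist_to_Sigma N1 N2 K m L - Inf NS"
      have g: "g > 0" using neg by (simp add: g_def)
      define e where "e = min 1 (g / (2 * (2 + Inf NS)))"
      have e: "e > 0" "e \<le> 1" "e \<le> g / (2 * (2 + Inf NS))" using g NSnn by (auto simp: e_def)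
      obtain L' where L': "L' \<in> Sigma_ill K m" "sdist N1 N2 L L' \<le> (Inf NS + e) * (1 + e)"
        using upper[OF e(1)] by blast
      have "dist_to_Sigma N1 N2 K m L \<le> sdist N1 N2 L L'"
        unfolding dist_to_Sigma_def
        by (rule cINF_lower[OF bdd_belowI2[where m="Inf NS"] L'(1)]) (rule lower)
      also have "\<dots> \<le> Inf NS + e * (1 + Inf NS + e)" using L'(2) by (simp add: algebra_simps)
      also have "\<dots> \<le> Inf NS + e * (2 + Inf NS)" using e NSnn by (intro add_left_mono mult_left_mono) auto
      also have "\<dots> \<le> Inf NS + g / 2"
      proof -
        have "e * (2 + Inf NS) \<le> g / (2 * (2 + Inf NS)) * (2 + Inf NS)"
          using e NSnn by (intro mult_right_mono) auto
        also have "\<dots> = g / 2" using NSnn by (simp add: field_simps)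
        finally show ?thesis by simp
      qed
      finally show False using g unfolding g_def by (simp add: field_simps)
    qed
  qed
  then show ?thesis using nueq by simp
qed




lemma cone_zero: "cone K \<Longrightarrow> K \<noteq> {} \<Longrightarrow> 0 \<in> K"
  unfolding cone_def by (metis scaleR_zero_left order_refl ex_in_conv)

lemma partB:
  fixes K L :: "'a::euclidean_space set" and N1 N2 :: "'a \<Rightarrow> real"
  assumes K: "regular_cone K" and N1: "is_norm N1" and N2: "is_norm N2"
    and m: "1 \<le> m" "m < DIM('a)" and LG: "L \<in> Gr m" and start: "orth_comp L \<inter> interior (dual_cone K) \<noteq> {}"
  shows "distbar_from_Sigma N1 N2 K m L = nubar N1 N2 K L"
proof -
  have L: "subspace L" "dim L = m" using LG unfolding Gr_def by auto
  have Kc: "closed K" "convex K" "cone K" "interior K \<noteq> {}" using K unfolding regular_cone_def by auto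
  have Kpt: "K \<inter> uminus ` K = {0}" using K unfolding regular_cone_def by auto
  have K0: "0 \<notin> interior K" by (rule zero_not_int[OF K])
  have zK: "0 \<in> K" using cone_zero[OF Kc(3)] Kc(4) interior_subset by blast
  obtain C where C: "C > 0" "\<And>x. N2 x \<le> C * N1 x" using norm_equiv[OF N1 N2] by blast
  define NB where "NB = {N2 (v - x) | v x. v \<in> K \<and> x \<in> L \<and> N1 x = 1}"
  have nbeq: "nubar N1 N2 K L = Inf NB" by (simp add: nubar_def NB_def)
  have NBbdd: "bdd_below NB" unfolding NB_def using normD(1)[OF N2] by (intro bdd_belowI[of _ 0]) auto
  obtain xa where xa: "xa \<in> L" "xa \<noteq> 0" using Gr_nonzero[OF LG m(1)] by blast
  define x1 where "x1 = (1 / N1 xa) *\<^sub>R xa"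
  have x1: "x1 \<in> L" "N1 x1 = 1" using xa L(1) unit_in_subspace[OF N1 xa(2)] by (auto simp: x1_def subspace_scale)
  have NBne: "NB \<noteq> {}"
  proof -
    have "N2 (0 - x1) \<in> NB" unfolding NB_def using zK x1 by blast
    then show ?thesis by blast
  qed
  have NBnn: "0 \<le> Inf NB" using NBne unfolding NB_def using normD(1)[OF N2] by (intro cInf_greatest) auto
  have Lne: "L - {0} \<noteq> {}" using xa by blast
  have LK: "L \<inter> K = {0}"
  proof -
    obtain y0 where y0: "y0 \<in> orth_comp L" "y0 \<in> interior (dual_cone K)" using start by blast
    have "k = 0" if "k \<in> L" "k \<in> K" for k
    proof (rule ccontr)
      assume k0: "k \<noteq> 0"
      have kp: "\<forall>v\<in>dual_cone K. 0 \<le> k \<bullet> v" using that(2) unfolding dual_cone_def by (auto simp: inner_commute)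
      have "k \<bullet> y0 > 0" by (rule int_pos_gen[OF kp k0 y0(2)])
      moreover have "y0 \<bullet> k = 0" using y0(1) that(1) unfolding orth_comp_def by auto
      ultimately show False by (simp add: inner_commute)
    qed
    then show ?thesis using zK subspace_0[OF L(1)] by blast
  qed

  have lower: "Inf NB \<le> sdistbar N1 N2 L' L" if L'S: "L' \<in> Sigma_ill K m" for L'
  proof -
    have "L' \<inter> K \<noteq> {0}" using L'S unfolding Sigma_ill_def by auto
    moreover have "0 \<in> L' \<inter> K" using L'S zK unfolding Sigma_ill_def Gr_def by (auto simp: subspace_0)
    ultimately obtain w0 where w0: "w0 \<in> L'" "w0 \<in> K" "w0 \<noteq> 0" by blast
    have bdd: "bdd_above ((\<lambda>x. INF v\<in>L - {0}. N2 (x - v) / N1 v) ` (L' - {0}))"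
    proof (rule bdd_aboveI2[where M="2 * C"])
      fix x assume x: "x \<in> L' - {0}"
      have pos: "N1 x > 0" using normD(1,2)[OF N1, of x] x by auto
      define v where "v = N1 x *\<^sub>R x1"
      have Nv: "N1 v = N1 x" using x1(2) normD(3)[OF N1, of "N1 x" x1] pos by (simp add: v_def)
      have vL: "v \<in> L - {0}" using x1(1) L(1) pos Nv normD(2)[OF N1, of v] by (auto simp: v_def subspace_scale)
      have bb: "bdd_below ((\<lambda>v. N2 (x - v) / N1 v) ` (L - {0}))"
        by (rule bdd_belowI2[where m=0]) (simp add: normD(1)[OF N1] normD(1)[OF N2])
      have "(INF v\<in>L - {0}. N2 (x - v) / N1 v) \<le> N2 (x - v) / N1 v" by (rule cINF_lower[OF bb vL])
      also have "\<dots> \<le> (C * N1 x + C * N1 x) / N1 x"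
      proof -
        have "N2 (x - v) \<le> N2 x + N2 v" by (rule norm_diff_le[OF N2])
        also have "\<dots> \<le> C * N1 x + C * N1 x" using C(2)[of x] C(2)[of v] Nv by simp
        finally have n: "N2 (x - v) \<le> C * N1 x + C * N1 x" .
        show ?thesis unfolding Nv by (rule divide_right_mono[OF n]) (use pos in simp)
      qed
      also have "\<dots> = 2 * C" using pos by (simp add: field_simps)
      finally show "(INF v\<in>L - {0}. N2 (x - v) / N1 v) \<le> 2 * C" .
    qed
    have "Inf NB \<le> (INF v\<in>L - {0}. N2 (w0 - v) / N1 v)"
    proof (rule cINF_greatest[OF Lne])
      fix v assume v: "v \<in> L - {0}"
      have pos: "N1 v > 0" using normD(1,2)[OF N1, of v] v by auto
      have "(1 / N1 v) *\<^sub>R w0 \<in> K" using w0(2) Kc(3) pos unfolding cone_def by simp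
      moreover have "(1 / N1 v) *\<^sub>R v \<in> L" using v L(1) by (simp add: subspace_scale)
      moreover have "N1 ((1 / N1 v) *\<^sub>R v) = 1" using unit_in_subspace[OF N1] v by simp
      ultimately have "N2 ((1 / N1 v) *\<^sub>R w0 - (1 / N1 v) *\<^sub>R v) \<in> NB" unfolding NB_def by blast
      then have "Inf NB \<le> N2 ((1 / N1 v) *\<^sub>R w0 - (1 / N1 v) *\<^sub>R v)" using NBbdd by (rule cInf_lower)
      also have "N2 ((1 / N1 v) *\<^sub>R w0 - (1 / N1 v) *\<^sub>R v) = N2 (w0 - v) / N1 v"
        using normD(3)[OF N2, of "1 / N1 v" "w0 - v"] pos by (simp add: scaleR_diff_right)
      finally show "Inf NB \<le> N2 (w0 - v) / N1 v" .
    qed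
    also have "\<dots> \<le> sdistbar N1 N2 L' L"
      unfolding sdistbar_def using w0 bdd by (intro cSUP_upper) auto
    finally show ?thesis .
  qed

  have upper: "\<exists>L'\<in>Sigma_ill K m. sdistbar N1 N2 L' L \<le> Inf NB + 2 * e" if e: "e > 0" for e
  proof -
    obtain D where "D \<in> NB" "D < Inf NB + e" using cInf_lessD[OF NBne, of "Inf NB + e"] e by auto
    then obtain v0 x0 where vx: "v0 \<in> K" "x0 \<in> L" "N1 x0 = 1" "N2 (v0 - x0) < Inf NB + e"
      unfolding NB_def by blast
    have x00: "x0 \<noteq> 0" using vx(3) normD(2)[OF N1, of 0] by auto
    obtain k where k: "k \<in> interior K" using Kc(4) by blast
    have k0: "k \<noteq> 0" using k K0 by auto
    have kK: "k \<in> K" using k interior_subset by blast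
    define \<eta> where "\<eta> = e / (N2 k + 1)"
    have Nk: "N2 k \<ge> 0" by (rule normD(1)[OF N2])
    have \<eta>: "\<eta> > 0" using e Nk by (simp add: \<eta>_def)
    have \<eta>k: "\<eta> * N2 k \<le> e"
    proof -
      have "\<eta> * N2 k \<le> \<eta> * (N2 k + 1)" using \<eta> by simp
      also have "\<dots> = e" using Nk by (simp add: \<eta>_def)
      finally show ?thesis .
    qed
    define v1 where "v1 = v0 + \<eta> *\<^sub>R k"
    have ek: "\<eta> *\<^sub>R k \<in> K" using kK Kc(3) \<eta> unfolding cone_def by simp
    have v1K: "v1 \<in> K" unfolding v1_def by (rule cone_add[OF Kc(3,2) vx(1) ek])
    have v10: "v1 \<noteq> 0"
    proof
      assume "v1 = 0"
      then have "\<eta> *\<^sub>R k = - v0" by (simp add: v1_def eq_neg_iff_add_eq_0 add.commute)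
      then have "\<eta> *\<^sub>R k \<in> uminus ` K" using vx(1) by blast
      then have "\<eta> *\<^sub>R k \<in> K \<inter> uminus ` K" using ek by blast
      then have "\<eta> *\<^sub>R k = 0" using Kpt by blast
      then show False using \<eta> k0 by simp
    qed
    define d where "d = v1 - x0"
    have Nd: "N2 d < Inf NB + 2 * e"
    proof -
      have "d = (v0 - x0) + \<eta> *\<^sub>R k" by (simp add: d_def v1_def algebra_simps)
      then have "N2 d \<le> N2 (v0 - x0) + \<eta> * N2 k"
        using normD(4)[OF N2, of "v0 - x0" "\<eta> *\<^sub>R k"] normD(3)[OF N2, of \<eta> k] \<eta> by simp
      then show ?thesis using vx(4) \<eta>k by linarith
    qed
    define c where "c = (1 / (x0 \<bullet> x0)) *\<^sub>R x0"
    have x0x0: "x0 \<bullet> x0 > 0" using x00 by simp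
    have cb: "c \<bullet> l \<le> 1 * N1 l" if lsp: "l \<in> span {x0}" for l
    proof -
      obtain a where a: "l = a *\<^sub>R x0" using lsp by (auto simp: span_singleton)
      have "c \<bullet> l = a" using x0x0 by (simp add: a c_def)
      also have "\<dots> \<le> \<bar>a\<bar> * N1 x0" using vx(3) by simp
      finally show ?thesis using normD(3)[OF N1, of a x0] a by simp
    qed
    obtain w where w: "\<And>l. l \<in> span {x0} \<Longrightarrow> w \<bullet> l = c \<bullet> l" "\<And>x. w \<bullet> x \<le> 1 * N1 x"
      using hb[OF subspace_span[of "{x0}"] N1 _ cb] by auto
    have wx0: "w \<bullet> x0 = 1" using w(1)[of x0] x0x0 by (simp add: span_base c_def)
    have wabs: "\<bar>w \<bullet> x\<bar> \<le> N1 x" for x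
      using w(2)[of x] w(2)[of "- x"] norm_neg[OF N1, of x] by simp
    have inj: "x = 0" if "t \<in> {0..1}" "x \<in> L" "x + (t * (w \<bullet> x)) *\<^sub>R d = 0" for t x
    proof (rule ccontr)
      assume "x \<noteq> 0"
      define cc where "cc = t * (w \<bullet> x)"
      have xe: "x = - (cc *\<^sub>R d)" using that(3) unfolding cc_def by (simp add: eq_neg_iff_add_eq_0)
      then have c: "cc \<noteq> 0" using \<open>x \<noteq> 0\<close> by auto
      have "(- 1 / cc) *\<^sub>R x = d" using c by (simp add: xe)
      then have "d \<in> L" using subspace_scale[OF L(1) that(2), of "- 1 / cc"] by simp
      then have "x0 + d \<in> L" using vx(2) L(1) by (simp add: subspace_add)
      then have "v1 \<in> L" by (simp add: d_def)
      then show False using LK v1K v10 by blast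
    qed
    have fin: "\<exists>x\<in>L. x \<noteq> 0 \<and> x + (w \<bullet> x) *\<^sub>R d \<in> K"
      using vx(2) x00 v1K wx0 by (intro bexI[of _ x0]) (auto simp: d_def)
    from critB[OF L(1) Kc(1,3) K0 inj LK fin] obtain t where
      t: "t \<in> {0..1}" and AB: "(\<lambda>x. x + (t * (w \<bullet> x)) *\<^sub>R d) ` L \<inter> interior K = {}
                 \<and> (\<lambda>x. x + (t * (w \<bullet> x)) *\<^sub>R d) ` L \<inter> K \<noteq> {0}" by (rule bexE)
    define L' where "L' = (\<lambda>x. x + (t * (w \<bullet> x)) *\<^sub>R d) ` L"
    have A': "L' \<inter> interior K = {}" using AB unfolding L'_def by (rule conjunct1)
    have B': "L' \<inter> K \<noteq> {0}" using AB unfolding L'_def by (rule conjunct2)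
    have inj_t: "x = 0" if "x \<in> L" "x + (t * (w \<bullet> x)) *\<^sub>R d = 0" for x by (rule inj[OF t that])
    have L'G: "L' \<in> Gr m" unfolding L'_def by (rule image_Gr[OF LG inj_t])
    then have L'sub: "subspace L'" unfolding Gr_def by simp
    obtain a where "a \<noteq> 0" "a \<in> orth_comp L'" "a \<in> dual_cone K"
      using sep[OF L'sub Kc(2,4) A'] by blast
    then have "orth_comp L' \<inter> dual_cone K \<noteq> {0}" by blast
    then have L'S: "L' \<in> Sigma_ill K m" using L'G B' unfolding Sigma_ill_def by blast
    have L'ne: "L' - {0} \<noteq> {}"
    proof -
      have "x0 + (t * (w \<bullet> x0)) *\<^sub>R d \<in> L'" using vx(2) unfolding L'_def by blast
      moreover have "x0 + (t * (w \<bullet> x0)) *\<^sub>R d \<noteq> 0" using inj_t[OF vx(2)] x00 by blast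
      ultimately show ?thesis by blast
    qed
    have "sdistbar N1 N2 L' L \<le> N2 d"
      unfolding sdistbar_def
    proof (rule cSUP_least[OF L'ne])
      fix x' assume x': "x' \<in> L' - {0}"
      then obtain x where x: "x \<in> L" "x' = x + (t * (w \<bullet> x)) *\<^sub>R d" unfolding L'_def by blast
      have x0': "x \<noteq> 0" using x' x by auto
      have pos: "N1 x > 0" using normD(1,2)[OF N1, of x] x0' by auto
      have bb: "bdd_below ((\<lambda>v. N2 (x' - v) / N1 v) ` (L - {0}))"
        by (rule bdd_belowI2[where m=0]) (simp add: normD(1)[OF N1] normD(1)[OF N2])
      have mem: "x \<in> L - {0}" using x(1) x0' by simp
      have "(INF v\<in>L - {0}. N2 (x' - v) / N1 v) \<le> N2 (x' - x) / N1 x" by (rule cINF_lower[OF bb mem])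
      also have "N2 (x' - x) = \<bar>t\<bar> * \<bar>w \<bullet> x\<bar> * N2 d"
        using normD(3)[OF N2, of "t * (w \<bullet> x)" d] x(2) by (simp add: abs_mult)
      finally have 1: "(INF v\<in>L - {0}. N2 (x' - v) / N1 v) \<le> \<bar>t\<bar> * \<bar>w \<bullet> x\<bar> * N2 d / N1 x" .
      have num: "\<bar>t\<bar> * \<bar>w \<bullet> x\<bar> * N2 d \<le> 1 * N1 x * N2 d"
        using t wabs[of x] normD(1)[OF N2, of d] normD(1)[OF N1, of x]
        by (intro mult_mono) auto
      have "\<bar>t\<bar> * \<bar>w \<bullet> x\<bar> * N2 d / N1 x \<le> (1 * N1 x * N2 d) / N1 x"
        by (rule divide_right_mono[OF num]) (use pos in simp)
      also have "(1 * N1 x * N2 d) / N1 x = N2 d" using pos by simp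
      finally show "(INF v\<in>L - {0}. N2 (x' - v) / N1 v) \<le> N2 d" using 1 by linarith
    qed
    then show ?thesis using L'S Nd by force
  qed

  have Sne: "Sigma_ill K m \<noteq> {}" using upper[of 1] by auto
  have "distbar_from_Sigma N1 N2 K m L = Inf NB"
  proof (rule antisym)
    show "Inf NB \<le> distbar_from_Sigma N1 N2 K m L"
      unfolding distbar_from_Sigma_def by (rule cINF_greatest[OF Sne lower])
  next
    show "distbar_from_Sigma N1 N2 K m L \<le> Inf NB"
    proof (rule ccontr)
      assume neg: "\<not> distbar_from_Sigma N1 N2 K m L \<le> Inf NB"
      define g where "g = distbar_from_Sigma N1 N2 K m L - Inf NB"
      have g: "g > 0" using neg by (simp add: g_def)
      obtain L' where L': "L' \<in> Sigma_ill K m" "sdistbar N1 N2 L' L \<le> Inf NB + 2 * (g / 4)"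
        using upper[of "g / 4"] g by auto
      have "distbar_from_Sigma N1 N2 K m L \<le> sdistbar N1 N2 L' L"
        unfolding distbar_from_Sigma_def
        by (rule cINF_lower[OF bdd_belowI2[where m="Inf NB"] L'(1)]) (rule lower)
      also have "\<dots> \<le> Inf NB + g / 2" using L'(2) by simp
      finally show False using g unfolding g_def by (simp add: field_simps)
    qed
  qed
  then show ?thesis using nbeq by simp
qed



theorem mainTheorem1:
  fixes K L :: "'a::euclidean_space set" and N1 N2 :: "'a \<Rightarrow> real" and m :: nat
  assumes "regular_cone K"
    and "is_norm N1" and "is_norm N2"
    and "1 \<le> m" and "m < DIM('a)"
    and "L \<in> Gr m"
  shows "(L \<inter> interior K \<noteq> {} \<longrightarrow> dist_to_Sigma N1 N2 K m L = nu N1 N2 K L)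
       \<and> (orth_comp L \<inter> interior (dual_cone K) \<noteq> {} \<longrightarrow> distbar_from_Sigma N1 N2 K m L = nubar N1 N2 K L)"
proof (intro conjI impI)
  assume "L \<inter> interior K \<noteq> {}"
  then show "dist_to_Sigma N1 N2 K m L = nu N1 N2 K L" by (rule partA[OF assms])
next
  assume "orth_comp L \<inter> interior (dual_cone K) \<noteq> {}"
  then show "distbar_from_Sigma N1 N2 K m L = nubar N1 N2 K L" by (rule partB[OF assms])
qed

end
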